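(* Let $\phi:\mathbb{R}^{n\times n}\to\mathbb{R}$ be twice differentiable and convex, let $f(X)=\phi(XX^T)$ for $X\in\mathbb{R}^{n\times r}$, and let $X^\star$ be a global minimizer of $f$. If $X\in\mathbb{R}^{n\times r}$ satisfies $\lambda_{\min}(X^TX)\le\epsilon_\lambda$ and \[ \langle\nabla f(X),V\rangle\le\epsilon_g\|V\|_F,\qquad\langle\nabla^2f(X)[V],V\rangle\ge-\epsilon_H\|V\|_F^2\qquad\text{for all }V\in\mathbb{R}^{n\times r}, \] where $\epsilon_g,\epsilon_H,\epsilon_\lambda\ge0$, then \[ f(X)-f(X^\star)\le C_g\epsilon_g+C_H\epsilon_H+C_\lambda\epsilon_\lambda, \] where $C_g=\tfrac12\|X\|_F$, $C_H=\tfrac12\|X^\star\|_F^2$ and $C_\lambda=2\|\nabla^2\phi(XX^T)\|\,\|X^\star\|_F^2$.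
   Context: $\langle A,B\rangle=\operatorname{tr}(A^TB)$, $\|\cdot\|_F$ is the Frobenius norm, $\nabla^2f(X)[V]$ denotes the Hessian of $f$ at $X$ applied to $V$, and $\|\nabla^2\phi(XX^T)\|$ is the operator norm of the Hessian of $\phi$ at $XX^T$ viewed as a linear map on $\mathbb{R}^{n\times n}$ with the Frobenius norm. *)

theory Defs
  imports "HOL-Analysis.Analysis"
begin

text \<open>Smallest eigenvalue of a (symmetric) real square matrix: the minimum over
  the (finite, nonempty for symmetric matrices) set of real eigenvalues.\<close>
definition lambda_min :: "real^'r^'r \<Rightarrow> real" where
  "lambda_min A = Min {l. \<exists>v. v \<noteq> 0 \<and> A *v v = l *\<^sub>R v}"

end

theory Submission imports Defs begin

lemma bilin_mt: "bounded_bilinear (\<lambda>(A::real^'r^'n) (B::real^'r^'n). A ** transpose B)"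
proof -
  have "bilinear (\<lambda>(A::real^'r^'n) (B::real^'r^'n). A ** transpose B)"
    unfolding bilinear_def
    by (auto intro!: linearI simp: vec_eq_iff matrix_matrix_mult_def transpose_def
        sum_distrib_left algebra_simps sum.distrib)
  then show ?thesis by (simp add: bilinear_conv_bounded_bilinear)
qed

lemma deriv_G: "((\<lambda>Z::real^'r^'n. Z ** transpose Z) has_derivative
   (\<lambda>h. Z ** transpose h + h ** transpose Z)) (at Z)"
  using bounded_bilinear.FDERIV[OF bilin_mt, of "\<lambda>x. x" "\<lambda>x. x" Z UNIV "\<lambda>x. x"]
  by simp

lemma convex_grad:
  fixes \<phi> :: "'a::real_normed_vector \<Rightarrow> real"
  assumes "convex_on UNIV \<phi>" "(\<phi> has_derivative L) (at a)"
  shows "\<phi> b \<ge> \<phi> a + L (b - a)"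
proof -
  define k where "k t = \<phi> (a + t *\<^sub>R (b - a))" for t :: real
  have kc: "convex_on UNIV k"
  proof (rule convex_onI)
    fix u x y :: real assume u: "0 < u" "u < 1"
    have e: "a + ((1 - u) *\<^sub>R x + u *\<^sub>R y) *\<^sub>R (b - a) =
       (1 - u) *\<^sub>R (a + x *\<^sub>R (b - a)) + u *\<^sub>R (a + y *\<^sub>R (b - a))"
      by (simp add: algebra_simps)
    show "k ((1 - u) *\<^sub>R x + u *\<^sub>R y) \<le> (1 - u) * k x + u * k y"
      unfolding k_def e using u
      by (intro convex_onD[OF assms(1)]) auto
  qed auto
  have lin: "linear L" using assms(2) has_derivative_linear by blast
  have "((\<lambda>t. a + t *\<^sub>R (b - a)) has_derivative (\<lambda>s. s *\<^sub>R (b - a))) (at 0)"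
    by (auto intro!: derivative_eq_intros)
  from has_derivative_compose[OF this] assms(2)
  have "(k has_derivative (\<lambda>s. L (s *\<^sub>R (b - a)))) (at 0)"
    unfolding k_def by simp
  then have "(k has_derivative (\<lambda>s. s * L (b - a))) (at 0)"
    using linear_scale[OF lin] by simp
  then have "(k has_derivative (*) (L (b - a))) (at 0)"
    by (rule has_derivative_eq_rhs) (simp add: fun_eq_iff mult.commute)
  then have "(k has_field_derivative L (b - a)) (at 0)"
    unfolding has_field_derivative_def .
  from convex_on_imp_above_tangent[OF kc, of 0 1 "L (b-a)"] this
  have "k 1 - k 0 \<ge> L (b - a)" by simp
  then show ?thesis by (simp add: k_def)
qed

lemma sym_eig_finite:
  fixes A :: "real^'r^'r"
  assumes sym: "\<And>x y. (A *v x) \<bullet> y = x \<bullet> (A *v y)"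
  shows "finite {l. \<exists>v. v \<noteq> 0 \<and> A *v v = l *\<^sub>R v}"
proof -
  define S where "S = {l. \<exists>v. v \<noteq> 0 \<and> A *v v = l *\<^sub>R v}"
  define ev where "ev l = (SOME v. v \<noteq> 0 \<and> A *v v = l *\<^sub>R v)" for l
  have ev: "ev l \<noteq> 0 \<and> A *v ev l = l *\<^sub>R ev l" if "l \<in> S" for l
    using that someI_ex[of "\<lambda>v. v \<noteq> 0 \<and> A *v v = l *\<^sub>R v"] unfolding S_def ev_def by auto
  have inj: "inj_on ev S"
  proof (rule inj_onI)
    fix l1 l2 assume l: "l1 \<in> S" "l2 \<in> S" "ev l1 = ev l2"
    then have "l1 *\<^sub>R ev l1 = l2 *\<^sub>R ev l1" using ev by metis
    then show "l1 = l2" using ev[OF l(1)] by simp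
  qed
  have po: "pairwise orthogonal (ev ` S)"
  proof (rule pairwiseI)
    fix x y assume "x \<in> ev ` S" "y \<in> ev ` S" "x \<noteq> y"
    then obtain l1 l2 where l: "l1 \<in> S" "l2 \<in> S" "x = ev l1" "y = ev l2" "l1 \<noteq> l2" by auto
    have "l1 * (x \<bullet> y) = (A *v x) \<bullet> y" using ev[OF l(1)] l by simp
    also have "\<dots> = x \<bullet> (A *v y)" by (rule sym)
    also have "\<dots> = l2 * (x \<bullet> y)" using ev[OF l(2)] l by simp
    finally show "orthogonal x y" using l(5) by (simp add: orthogonal_def)
  qed
  have "0 \<notin> ev ` S" using ev by auto
  then have "independent (ev ` S)" using pairwise_orthogonal_independent po by blast
  then have "finite (ev ` S)" using independent_bound by blast
  then have "finite S" using finite_imageD inj by blast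
  then show ?thesis by (simp add: S_def)
qed

lemma quad_nonneg_lin0:
  fixes b c :: real
  assumes "\<And>t. 2 * t * b + t\<^sup>2 * c \<ge> 0"
  shows "b = 0"
proof (rule ccontr)
  assume b: "b \<noteq> 0"
  define d where "d = \<bar>c\<bar> + 1"
  define t where "t = - b / d"
  have d: "d > 0" "c < d" by (auto simp: d_def)
  have "2 * t * b + t\<^sup>2 * c = (b\<^sup>2 / d) * (c / d - 2)"
    unfolding t_def using d by (simp add: field_simps power2_eq_square)
  moreover have "c / d < 1" using d by (simp add: divide_less_eq)
  moreover have "b\<^sup>2 / d > 0" using b d by simp
  moreover have "c / d - 2 < 0" using \<open>c / d < 1\<close> by simp
  ultimately have "2 * t * b + t\<^sup>2 * c < 0" using mult_pos_neg[of "b\<^sup>2 / d" "c / d - 2"]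
    by simp
  then show False using assms[of t] by simp
qed

lemma sym_eig_exists:
  fixes A :: "real^'r^'r"
  assumes sym: "\<And>x y. (A *v x) \<bullet> y = x \<bullet> (A *v y)"
  shows "\<exists>l v. v \<noteq> 0 \<and> A *v v = l *\<^sub>R v"
proof -
  define q where "q x = x \<bullet> (A *v x)" for x
  have cq: "continuous_on (sphere 0 1) q" unfolding q_def
    by (intro continuous_intros linear_continuous_on matrix_vector_mul_bounded_linear)
  have ne: "sphere (0::real^'r) 1 \<noteq> {}" by simp
  obtain u where u: "u \<in> sphere 0 1" and umin: "\<And>y. y \<in> sphere 0 1 \<Longrightarrow> q u \<le> q y"
    using continuous_attains_inf[OF compact_sphere ne cq] by blast
  have nu: "norm u = 1" using u by simp
  have uu: "u \<bullet> u = 1" using nu by (simp add: power2_norm_eq_inner[symmetric])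
  define l where "l = q u"
  have qs: "q (c *\<^sub>R x) = c\<^sup>2 * q x" for c x
    by (simp add: q_def matrix_vector_mult_scaleR power2_eq_square)
  have ge: "q y \<ge> l * (y \<bullet> y)" for y
  proof (cases "y = 0")
    case True then show ?thesis by (simp add: q_def)
  next
    case False
    define y' where "y' = (1 / norm y) *\<^sub>R y"
    have "y' \<in> sphere 0 1" using False by (simp add: y'_def)
    then have "l \<le> q y'" using umin l_def by simp
    moreover have "q y = (norm y)\<^sup>2 * q y'"
      using False by (simp add: y'_def qs power2_eq_square)
    ultimately have "(norm y)\<^sup>2 * l \<le> q y" by (simp add: mult_left_mono)
    then show ?thesis by (simp add: power2_norm_eq_inner mult.commute)
  qed
  define w where "w = A *v u - l *\<^sub>R u"
  define b where "b = w \<bullet> w"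
  define c where "c = q w - l * (w \<bullet> w)"
  have wb: "w \<bullet> (A *v u) - l * (u \<bullet> w) = b"
    unfolding b_def w_def
    by (simp add: inner_diff_left inner_diff_right inner_commute uu l_def q_def algebra_simps)
  have "2 * t * b + t\<^sup>2 * c \<ge> 0" for t
  proof -
    have "q (u + t *\<^sub>R w) - l * ((u + t *\<^sub>R w) \<bullet> (u + t *\<^sub>R w))
        = 2 * t * (w \<bullet> (A *v u) - l * (u \<bullet> w)) + t\<^sup>2 * c"
      unfolding q_def c_def l_def
      using sym[of u w]
      by (simp add: matrix_vector_right_distrib matrix_vector_mult_scaleR inner_add_left
          inner_add_right uu inner_commute power2_eq_square algebra_simps)
    then show ?thesis using ge[of "u + t *\<^sub>R w"] wb by simp
  qed
  then have "b = 0" by (rule quad_nonneg_lin0)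
  then have "w = 0" by (simp add: b_def)
  then have "A *v u = l *\<^sub>R u" by (simp add: w_def)
  moreover have "u \<noteq> 0" using nu by auto
  ultimately show ?thesis by blast
qed

lemma norm2_vec: "(norm (x::real^'k))\<^sup>2 = (\<Sum>i\<in>UNIV. (x$i)\<^sup>2)"
  unfolding power2_norm_eq_inner by (simp add: inner_vec_def power2_eq_square)

lemma norm2_mat: "(norm (M::real^'k^'m))\<^sup>2 = (\<Sum>i\<in>UNIV. \<Sum>k\<in>UNIV. (M$i$k)\<^sup>2)"
  unfolding power2_norm_eq_inner by (simp add: inner_vec_def power2_eq_square)

definition outer :: "real^'m \<Rightarrow> real^'k \<Rightarrow> real^'k^'m" where
  "outer a b = (\<chi> i k. a$i * b$k)"

lemma norm_outer: "norm (outer a b) = norm a * norm b"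
proof -
  have "(norm (outer a b))\<^sup>2 = (norm a * norm b)\<^sup>2"
    unfolding norm2_mat power_mult_distrib norm2_vec
    by (simp add: outer_def power_mult_distrib sum_product)
  then show ?thesis by (simp add: power2_eq_iff_nonneg)
qed

lemma mul_outer1: "(X::real^'r^'n) ** transpose (outer z u) = outer (X *v u) z"
  by (simp add: vec_eq_iff matrix_matrix_mult_def transpose_def outer_def
      matrix_vector_mult_def sum_distrib_right sum_distrib_left mult_ac)

lemma mul_outer2: "outer z u ** transpose (X::real^'r^'n) = outer z (X *v u)"
  by (simp add: vec_eq_iff matrix_matrix_mult_def transpose_def outer_def
      matrix_vector_mult_def sum_distrib_left mult_ac)

lemma sum_outer_gram:
  "(\<Sum>j\<in>UNIV. outer (\<chi> i. (Xs::real^'r^'n)$i$j) u ** transpose (outer (\<chi> i. Xs$i$j) u))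
    = (u \<bullet> u) *\<^sub>R (Xs ** transpose Xs)"
  by (simp add: vec_eq_iff matrix_matrix_mult_def transpose_def outer_def inner_vec_def
      sum_distrib_left sum_distrib_right mult_ac)

lemma tX_inner: "(transpose M *v a) \<bullet> b = a \<bullet> ((M::real^'r^'n) *v b)"
  by (simp add: dot_lmul_matrix)

lemma norm_blinfun2: "\<bar>blinfun_apply (blinfun_apply H W) W\<bar> \<le> norm H * (norm W)\<^sup>2"
proof -
  have "\<bar>blinfun_apply (blinfun_apply H W) W\<bar> \<le> norm (blinfun_apply H W) * norm W"
    using norm_blinfun[of "blinfun_apply H W" W] by simp
  also have "\<dots> \<le> norm H * norm W * norm W"
    by (intro mult_right_mono norm_blinfun) auto
  finally show ?thesis by (simp add: power2_eq_square mult_ac)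
qed

theorem proposition10:
  fixes \<phi> :: "real^'n^'n \<Rightarrow> real"
    and \<phi>' :: "real^'n^'n \<Rightarrow> ((real^'n^'n) \<Rightarrow>\<^sub>L real)"
    and \<phi>'' :: "real^'n^'n \<Rightarrow> ((real^'n^'n) \<Rightarrow>\<^sub>L ((real^'n^'n) \<Rightarrow>\<^sub>L real))"
    and f :: "real^'r^'n \<Rightarrow> real"
    and f' :: "real^'r^'n \<Rightarrow> ((real^'r^'n) \<Rightarrow>\<^sub>L real)"
    and f'' :: "real^'r^'n \<Rightarrow> ((real^'r^'n) \<Rightarrow>\<^sub>L ((real^'r^'n) \<Rightarrow>\<^sub>L real))"
    and X Xs :: "real^'r^'n"
    and eps_g eps_H eps_lambda :: real
  assumes phi_d1: "\<And>Y. (\<phi> has_derivative blinfun_apply (\<phi>' Y)) (at Y)"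
    and phi_d2: "\<And>Y. (\<phi>' has_derivative blinfun_apply (\<phi>'' Y)) (at Y)"
    and phi_convex: "convex_on UNIV \<phi>"
    and f_def: "\<And>Z. f Z = \<phi> (Z ** transpose Z)"
    and f_d1: "\<And>Z. (f has_derivative blinfun_apply (f' Z)) (at Z)"
    and f_d2: "\<And>Z. (f' has_derivative blinfun_apply (f'' Z)) (at Z)"
    and Xs_min: "\<And>Z. f Xs \<le> f Z"
    and eps_nonneg: "eps_g \<ge> 0" "eps_H \<ge> 0" "eps_lambda \<ge> 0"
    and lam: "lambda_min (transpose X ** X) \<le> eps_lambda"
    and grad: "\<And>V. f' X V \<le> eps_g * norm V"
    and hess: "\<And>V. f'' X V V \<ge> - eps_H * (norm V)\<^sup>2"
  shows "f X - f Xs \<le> (1/2 * norm X) * eps_g + (1/2 * (norm Xs)\<^sup>2) * eps_H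
           + (2 * norm (\<phi>'' (X ** transpose X)) * (norm Xs)\<^sup>2) * eps_lambda"
proof -
  define L where "L = \<phi>' (X ** transpose X)"
  define H where "H = \<phi>'' (X ** transpose X)"
  have F1: "f' Z V = \<phi>' (Z ** transpose Z) (Z ** transpose V + V ** transpose Z)" for Z V
  proof -
    have "((\<lambda>Z. \<phi> (Z ** transpose Z)) has_derivative
        (\<lambda>V. \<phi>' (Z ** transpose Z) (Z ** transpose V + V ** transpose Z))) (at Z)"
      using has_derivative_compose[OF deriv_G phi_d1] .
    moreover have "(\<lambda>Z. \<phi> (Z ** transpose Z)) = f" by (simp add: fun_eq_iff f_def)
    ultimately have "(f has_derivative
        (\<lambda>V. \<phi>' (Z ** transpose Z) (Z ** transpose V + V ** transpose Z))) (at Z)" by simp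
    from has_derivative_unique[OF f_d1[of Z] this] show ?thesis by (simp add: fun_eq_iff)
  qed
  have F2: "f'' X V V = H (X ** transpose V + V ** transpose X) (X ** transpose V + V ** transpose X)
      + 2 * L (V ** transpose V)" for V
  proof -
    define p where "p t = X + t *\<^sub>R V" for t :: real
    have dp: "(p has_derivative (\<lambda>s. s *\<^sub>R V)) (at 0)" unfolding p_def
      by (auto intro!: derivative_eq_intros)
    have p0: "p 0 = X" by (simp add: p_def)
    have d1: "((\<lambda>t. f' (p t)) has_derivative (\<lambda>s. f'' X (s *\<^sub>R V))) (at 0)"
      using has_derivative_compose[OF dp f_d2[of "p 0"]] p0 by simp
    have d1': "((\<lambda>t. f' (p t) V) has_derivative (\<lambda>s. f'' X (s *\<^sub>R V) V)) (at 0)"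
      using blinfun.FDERIV[OF d1 has_derivative_const[of V]] by simp
    have dpp: "((\<lambda>t. p t ** transpose (p t)) has_derivative
        (\<lambda>s. X ** transpose (s *\<^sub>R V) + (s *\<^sub>R V) ** transpose X)) (at 0)"
      using has_derivative_compose[OF dp deriv_G] p0 by simp
    have dphi: "((\<lambda>t. \<phi>' (p t ** transpose (p t))) has_derivative
        (\<lambda>s. H (X ** transpose (s *\<^sub>R V) + (s *\<^sub>R V) ** transpose X))) (at 0)"
      using has_derivative_compose[OF dpp phi_d2[of "p 0 ** transpose (p 0)"]] p0 H_def by simp
    have de1: "((\<lambda>t. p t ** transpose V) has_derivative
        (\<lambda>s. p 0 ** transpose 0 + (s *\<^sub>R V) ** transpose V)) (at 0)"
      using bounded_bilinear.FDERIV[OF bilin_mt, OF dp has_derivative_const[of V]] by simp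
    have de2: "((\<lambda>t. V ** transpose (p t)) has_derivative
        (\<lambda>s. V ** transpose (s *\<^sub>R V) + 0 ** transpose (p 0))) (at 0)"
      using bounded_bilinear.FDERIV[OF bilin_mt, OF has_derivative_const[of V] dp] by simp
    have de: "((\<lambda>t. p t ** transpose V + V ** transpose (p t)) has_derivative
        (\<lambda>s. (p 0 ** transpose 0 + (s *\<^sub>R V) ** transpose V) +
             (V ** transpose (s *\<^sub>R V) + 0 ** transpose (p 0)))) (at 0)"
      using has_derivative_add[OF de1 de2] .
    have d2: "((\<lambda>t. \<phi>' (p t ** transpose (p t)) (p t ** transpose V + V ** transpose (p t)))
      has_derivative (\<lambda>s. \<phi>' (p 0 ** transpose (p 0))
             ((p 0 ** transpose 0 + (s *\<^sub>R V) ** transpose V) +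
             (V ** transpose (s *\<^sub>R V) + 0 ** transpose (p 0)))
          + H (X ** transpose (s *\<^sub>R V) + (s *\<^sub>R V) ** transpose X)
              (p 0 ** transpose V + V ** transpose (p 0)))) (at 0)"
      using blinfun.FDERIV[OF dphi de] .
    have eq: "(\<lambda>t. \<phi>' (p t ** transpose (p t)) (p t ** transpose V + V ** transpose (p t))) = (\<lambda>t. f' (p t) V)"
      by (simp add: F1)
    have d2': "((\<lambda>t. f' (p t) V)
      has_derivative (\<lambda>s. \<phi>' (p 0 ** transpose (p 0))
             ((p 0 ** transpose 0 + (s *\<^sub>R V) ** transpose V) +
             (V ** transpose (s *\<^sub>R V) + 0 ** transpose (p 0)))
          + H (X ** transpose (s *\<^sub>R V) + (s *\<^sub>R V) ** transpose X)
              (p 0 ** transpose V + V ** transpose (p 0)))) (at 0)"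
      using d2 unfolding eq .
    note has_derivative_unique[OF d1' d2']
    from fun_cong[OF this, of 1]
    have "f'' X V V = L ((X ** transpose 0 + V ** transpose V) + (V ** transpose V + 0 ** transpose X))
          + H (X ** transpose V + V ** transpose X) (X ** transpose V + V ** transpose X)"
      by (simp only: p0 scaleR_one L_def)
    moreover have "X ** transpose (0::real^'r^'n) = 0" "(0::real^'r^'n) ** transpose X = 0"
      by (simp_all add: vec_eq_iff matrix_matrix_mult_def transpose_def)
    ultimately show ?thesis
      by (simp only: blinfun.zero_right add_0_left add_0_right blinfun.add_right)
  qed
  have A: "L (X ** transpose X) \<le> 1/2 * norm X * eps_g"
  proof -
    have "f' X X = L (X ** transpose X + X ** transpose X)" by (simp add: F1 L_def)
    also have "\<dots> = 2 * L (X ** transpose X)" by (simp only: blinfun.add_right mult_2)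
    finally show ?thesis using grad[of X] by (simp add: mult.commute)
  qed
  have C: "f Xs \<ge> f X + L (Xs ** transpose Xs) - L (X ** transpose X)"
    using convex_grad[OF phi_convex phi_d1, of "X ** transpose X" "Xs ** transpose Xs"]
    by (simp add: f_def L_def blinfun.diff_right)
  define A where "A = transpose X ** X"
  have g: "(A *v a) \<bullet> b = (X *v a) \<bullet> (X *v b)" for a b
    by (simp add: A_def matrix_vector_mul_assoc[symmetric] dot_lmul_matrix)
  have symA: "(A *v x) \<bullet> y = x \<bullet> (A *v y)" for x y
    by (metis g inner_commute)
  define S where "S = {l. \<exists>v. v \<noteq> 0 \<and> A *v v = l *\<^sub>R v}"
  have finS: "finite S" unfolding S_def by (rule sym_eig_finite[OF symA])
  have neS: "S \<noteq> {}" using sym_eig_exists[OF symA] unfolding S_def by blast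
  define lm where "lm = lambda_min A"
  have "lm \<in> S" unfolding lm_def lambda_min_def S_def[symmetric] using Min_in[OF finS neS] .
  then obtain v where v: "v \<noteq> 0" "A *v v = lm *\<^sub>R v" unfolding S_def by blast
  have lmle: "lm \<le> eps_lambda" using lam by (simp add: lm_def A_def)
  define u where "u = (1 / norm v) *\<^sub>R v"
  have nu: "norm u = 1" using v by (simp add: u_def)
  have uu: "u \<bullet> u = 1" using nu by (simp add: power2_norm_eq_inner[symmetric])
  have Au: "A *v u = lm *\<^sub>R u" using v by (simp add: u_def matrix_vector_mult_scaleR)
  have Xu2: "(norm (X *v u))\<^sup>2 = lm"
  proof -
    have "(norm (X *v u))\<^sup>2 = (X *v u) \<bullet> (X *v u)" by (simp add: power2_norm_eq_inner)
    also have "\<dots> = (A *v u) \<bullet> u" by (simp add: g)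
    also have "\<dots> = lm" using Au uu by simp
    finally show ?thesis .
  qed
  \<comment> \<open>per-column Hessian test directions\<close>
  define z where "z j = (\<chi> i. Xs$i$j)" for j
  define W where "W j = outer (z j) u" for j
  define nH where "nH = norm H"
  have nH0: "nH \<ge> 0" by (simp add: nH_def)
  have col: "2 * L (W j ** transpose (W j)) \<ge> - eps_H * (norm (z j))\<^sup>2 - 4 * lm * nH * (norm (z j))\<^sup>2" for j
  proof -
    define B where "B = X ** transpose (W j) + W j ** transpose X"
    have nW: "norm (W j) = norm (z j)" by (simp add: W_def norm_outer nu)
    have B: "B = outer (X *v u) (z j) + outer (z j) (X *v u)"
      by (simp add: B_def W_def mul_outer1 mul_outer2)
    have "norm B \<le> 2 * (norm (X *v u) * norm (z j))"
      unfolding B using norm_triangle_ineq[of "outer (X *v u) (z j)" "outer (z j) (X *v u)"]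
      by (simp add: norm_outer mult.commute)
    then have "(norm B)\<^sup>2 \<le> (2 * (norm (X *v u) * norm (z j)))\<^sup>2"
      by (intro power_mono) auto
    also have "\<dots> = 4 * lm * (norm (z j))\<^sup>2"
      by (simp add: power_mult_distrib Xu2)
    finally have nB: "(norm B)\<^sup>2 \<le> 4 * lm * (norm (z j))\<^sup>2" .
    have "H B B \<le> nH * (norm B)\<^sup>2" using norm_blinfun2[of H B] by (simp add: nH_def)
    also have "\<dots> \<le> nH * (4 * lm * (norm (z j))\<^sup>2)" by (intro mult_left_mono nB nH0)
    finally have HB: "H B B \<le> 4 * lm * nH * (norm (z j))\<^sup>2" by (simp add: mult_ac)
    have "- eps_H * (norm (z j))\<^sup>2 \<le> f'' X (W j) (W j)" using hess[of "W j"] nW by simp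
    also have "\<dots> = H B B + 2 * L (W j ** transpose (W j))" by (simp add: F2 B_def)
    finally show ?thesis using HB by linarith
  qed
  have sumW: "(\<Sum>j\<in>UNIV. W j ** transpose (W j)) = Xs ** transpose Xs"
    using sum_outer_gram[of Xs u] by (simp add: W_def z_def uu)
  have sumz: "(\<Sum>j\<in>UNIV. (norm (z j))\<^sup>2) = (norm Xs)\<^sup>2"
  proof -
    have "(\<Sum>j\<in>UNIV. (norm (z j))\<^sup>2) = (\<Sum>j\<in>UNIV. \<Sum>i\<in>UNIV. (Xs$i$j)\<^sup>2)"
      by (simp add: norm2_vec z_def)
    also have "\<dots> = (\<Sum>i\<in>UNIV. \<Sum>j\<in>UNIV. (Xs$i$j)\<^sup>2)" by (rule sum.swap)
    also have "\<dots> = (norm Xs)\<^sup>2" by (simp add: norm2_mat)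
    finally show ?thesis .
  qed
  have "(\<Sum>j\<in>UNIV. - eps_H * (norm (z j))\<^sup>2 - 4 * lm * nH * (norm (z j))\<^sup>2)
      \<le> (\<Sum>j\<in>UNIV. 2 * L (W j ** transpose (W j)))"
    by (rule sum_mono) (rule col)
  also have "\<dots> = 2 * L (Xs ** transpose Xs)"
    by (simp add: sum_distrib_left[symmetric] blinfun.sum_right[symmetric] sumW)
  finally have D: "- eps_H * (norm Xs)\<^sup>2 - 4 * lm * nH * (norm Xs)\<^sup>2 \<le> 2 * L (Xs ** transpose Xs)"
    by (simp add: sum_subtractf sum_negf sum_distrib_left[symmetric] sumz)
  have E: "2 * nH * (norm Xs)\<^sup>2 * lm \<le> 2 * nH * (norm Xs)\<^sup>2 * eps_lambda"
    using lmle nH0 by (intro mult_left_mono) auto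
  have D': "- L (Xs ** transpose Xs) \<le> 1/2 * (norm Xs)\<^sup>2 * eps_H + 2 * nH * (norm Xs)\<^sup>2 * lm"
    using D by (simp add: algebra_simps)
  have C': "f X - f Xs \<le> L (X ** transpose X) - L (Xs ** transpose Xs)" using C by simp
  have "f X - f Xs \<le> 1/2 * norm X * eps_g + 1/2 * (norm Xs)\<^sup>2 * eps_H + 2 * nH * (norm Xs)\<^sup>2 * eps_lambda"
    using A C' D' E by linarith
  then show ?thesis by (simp add: nH_def H_def)
qed

end
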